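(* Let $V=\bigoplus_{n\ge 0}V_n$ be a VOA over $\mathbb{Q}$ with $\dim V_0=1$, having a nondegenerate invariant bilinear form $\langle\ ,\ \rangle$. Let $J\subseteq V$ be a homogeneous IVOA and let $J^{\circ}=\{u\in V\mid \langle u,J\rangle\subseteq\mathbb{Z}\}$. Then $\frac{L(1)^n}{n!}J^{\circ}\subseteq J^{\circ}$ for all integers $n\ge 0$.
   Context: A VOA over $\mathbb{Q}$ has vacuum $\mathbf{1}$, conformal vector $\omega$, vertex operators $Y(a,z)=\sum_{n}a_nz^{-n-1}$, and $L(n)=\omega_{n+1}$. An invariant bilinear form satisfies $\langle Y(a,z)b,c\rangle=\langle b,Y(e^{zL(1)}(-z^{-2})^{L(0)}a,z^{-1})c\rangle$ (in particular $L(1)$ and $L(-1)$ are adjoint). An integral form (IF) in $V$ is an additive subgroup which is the $\mathbb{Z}$-span of a $\mathbb{Q}$-basis of $V$, closed under all products $a_kb$ ($k\in\mathbb{Z}$), and containing a positive integer multiple of $\mathbf{1}$ and of $\omega$. An IVOA is an IF containing $\mathbf{1}$. $J$ is homogeneous if $J=\bigoplus_n(J\cap V_n)$. *)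

theory Defs
  imports Complex_Main
begin

text \<open>The underlying space is the whole
type 'v, with scalar multiplication sc :: rat => 'v => 'v.  The modes of the vertex
operators are given by md a n b = a_n b (n an integer), i.e. Y(a,z) b = sum_n (md a n b) z^(-n-1).
vac is the vacuum, om the conformal vector, L(n) = om_(n+1).\<close>

definition fsum :: "(nat \<Rightarrow> 'v::comm_monoid_add) \<Rightarrow> 'v" where
  "fsum f = sum f {i. f i \<noteq> 0}"

definition vL :: "('v \<Rightarrow> int \<Rightarrow> 'v \<Rightarrow> 'v) \<Rightarrow> 'v \<Rightarrow> int \<Rightarrow> 'v \<Rightarrow> 'v" where
  "vL md om n = md om (n + 1)"

definition wtsp :: "(rat \<Rightarrow> 'v \<Rightarrow> 'v) \<Rightarrow> ('v \<Rightarrow> int \<Rightarrow> 'v \<Rightarrow> 'v) \<Rightarrow> 'v \<Rightarrow> int \<Rightarrow> 'v set" where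
  "wtsp sc md om n = {v. vL md om 0 v = sc (of_int n) v}"

definition sgn_pow :: "int \<Rightarrow> rat" where
  "sgn_pow r = (if even r then 1 else -1)"

definition is_VOA :: "(rat \<Rightarrow> 'v::ab_group_add \<Rightarrow> 'v) \<Rightarrow> ('v \<Rightarrow> int \<Rightarrow> 'v \<Rightarrow> 'v) \<Rightarrow> 'v \<Rightarrow> 'v \<Rightarrow> bool" where
  "is_VOA sc md vac om \<longleftrightarrow>
     vector_space sc \<and>
     \<comment> \<open>bilinearity of the products\<close>
     (\<forall>a n. Vector_Spaces.linear sc sc (md a n)) \<and>
     (\<forall>n b. Vector_Spaces.linear sc sc (\<lambda>a. md a n b)) \<and>
     \<comment> \<open>truncation: Y(a,z)b has only finitely many negative powers of z\<close>
     (\<forall>a b. \<exists>N. \<forall>n\<ge>N. md a n b = 0) \<and>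
     \<comment> \<open>vacuum: Y(1,z) = id\<close>
     (\<forall>n v. md vac n v = (if n = -1 then v else 0)) \<and>
     \<comment> \<open>creation: Y(a,z)1 \<in> V[[z]] and a_(-1) 1 = a\<close>
     (\<forall>a. md a (-1) vac = a) \<and>
     (\<forall>a n. n \<ge> 0 \<longrightarrow> md a n vac = 0) \<and>
     \<comment> \<open>Jacobi identity (Borcherds identity, component form)\<close>
     (\<forall>a b c p q r.
        fsum (\<lambda>i. sc (of_int p gchoose i) (md (md a (r + int i) b) (p + q - int i) c))
        = fsum (\<lambda>i. sc ((-1) ^ i * (of_int r gchoose i)) (md a (p + r - int i) (md b (q + int i) c)))
          - sc (sgn_pow r)
              (fsum (\<lambda>i. sc ((-1) ^ i * (of_int r gchoose i)) (md b (q + r - int i) (md a (p + int i) c))))) \<and>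
     \<comment> \<open>Virasoro relations with some central charge\<close>
     (\<exists>cc::rat. \<forall>m n v.
        vL md om m (vL md om n v) - vL md om n (vL md om m v)
        = sc (of_int (m - n)) (vL md om (m + n) v)
          + (if m + n = 0 then sc ((of_int m ^ 3 - of_int m) / 12 * cc) v else 0)) \<and>
     \<comment> \<open>L(-1)-derivative property: Y(L(-1)a,z) = d/dz Y(a,z)\<close>
     (\<forall>a n b. md (vL md om (-1) a) n b = sc (- of_int n) (md a (n - 1) b)) \<and>
     \<comment> \<open>om has weight 2\<close>
     om \<in> wtsp sc md om 2 \<and>
     \<comment> \<open>grading: V = direct sum of the L(0)-eigenspaces V_n, n \<ge> 0, each finite-dimensional\<close>
     (\<forall>v. \<exists>S f. finite S \<and> (\<forall>n\<in>S. f n \<in> wtsp sc md om n) \<and> v = sum f S) \<and>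
     (\<forall>n<0. wtsp sc md om n = {0}) \<and>
     (\<forall>n. \<exists>B. finite B \<and> wtsp sc md om n \<subseteq> module.span sc B)"

text \<open>Nondegenerate invariant bilinear form, invariance written in components:
for a \<in> V_k,  <a_n b, c> = (-1)^k sum_j (1/j!) <b, (L(1)^j a)_(2k-n-j-2) c>.\<close>
definition is_nondeg_invariant_form ::
  "(rat \<Rightarrow> 'v::ab_group_add \<Rightarrow> 'v) \<Rightarrow> ('v \<Rightarrow> int \<Rightarrow> 'v \<Rightarrow> 'v) \<Rightarrow> 'v \<Rightarrow> ('v \<Rightarrow> 'v \<Rightarrow> rat) \<Rightarrow> bool" where
  "is_nondeg_invariant_form sc md om bf \<longleftrightarrow>
     (\<forall>u. Vector_Spaces.linear sc (*) (bf u)) \<and>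
     (\<forall>v. Vector_Spaces.linear sc (*) (\<lambda>u. bf u v)) \<and>
     (\<forall>u. (\<forall>v. bf u v = 0) \<longrightarrow> u = 0) \<and>
     (\<forall>v. (\<forall>u. bf u v = 0) \<longrightarrow> v = 0) \<and>
     (\<forall>k a n b c. a \<in> wtsp sc md om k \<longrightarrow>
        bf (md a n b) c
        = sgn_pow k * (\<Sum>j\<in>{0..nat k}.
             (1 / fact j) * bf b (md ((vL md om 1 ^^ j) a) (2 * k - n - int j - 2) c)))"

definition int_span :: "(rat \<Rightarrow> 'v::ab_group_add \<Rightarrow> 'v) \<Rightarrow> 'v set \<Rightarrow> 'v set" where
  "int_span sc B = {sum (\<lambda>b. sc (of_int (c b)) b) S | S c. finite S \<and> S \<subseteq> B}"

definition is_integral_form :: "(rat \<Rightarrow> 'v::ab_group_add \<Rightarrow> 'v) \<Rightarrow> ('v \<Rightarrow> int \<Rightarrow> 'v \<Rightarrow> 'v) \<Rightarrow> 'v \<Rightarrow> 'v \<Rightarrow> 'v set \<Rightarrow> bool" where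
  "is_integral_form sc md vac om J \<longleftrightarrow>
     (\<exists>B. \<not> module.dependent sc B \<and> module.span sc B = UNIV \<and> J = int_span sc B) \<and>
     (\<forall>a\<in>J. \<forall>b\<in>J. \<forall>k. md a k b \<in> J) \<and>
     (\<exists>m::nat. m > 0 \<and> sc (of_nat m) vac \<in> J) \<and>
     (\<exists>m::nat. m > 0 \<and> sc (of_nat m) om \<in> J)"

definition is_IVOA :: "(rat \<Rightarrow> 'v::ab_group_add \<Rightarrow> 'v) \<Rightarrow> ('v \<Rightarrow> int \<Rightarrow> 'v \<Rightarrow> 'v) \<Rightarrow> 'v \<Rightarrow> 'v \<Rightarrow> 'v set \<Rightarrow> bool" where
  "is_IVOA sc md vac om J \<longleftrightarrow> is_integral_form sc md vac om J \<and> vac \<in> J"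

definition is_homogeneous :: "(rat \<Rightarrow> 'v::ab_group_add \<Rightarrow> 'v) \<Rightarrow> ('v \<Rightarrow> int \<Rightarrow> 'v \<Rightarrow> 'v) \<Rightarrow> 'v \<Rightarrow> 'v set \<Rightarrow> bool" where
  "is_homogeneous sc md om J \<longleftrightarrow>
     (\<forall>v\<in>J. \<exists>S f. finite S \<and> (\<forall>n\<in>S. f n \<in> J \<inter> wtsp sc md om n) \<and> v = sum f S)"

definition dual_lattice :: "('v \<Rightarrow> 'v \<Rightarrow> rat) \<Rightarrow> 'v set \<Rightarrow> 'v set" where
  "dual_lattice bf J = {u. \<forall>v\<in>J. bf u v \<in> \<int>}"

end

theory Submission
  imports Defs
begin

lemma lin0: "Vector_Spaces.linear s1 s2 f \<Longrightarrow> f 0 = 0"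
  using module_hom.zero linear_iff_module_hom by metis

lemma linsc: "Vector_Spaces.linear s1 s2 f \<Longrightarrow> f (s1 r x) = s2 r (f x)"
  using module_hom.scale linear_iff_module_hom by metis

theorem lemma2p2:
  fixes sc :: "rat \<Rightarrow> 'v::ab_group_add \<Rightarrow> 'v"
    and md :: "'v \<Rightarrow> int \<Rightarrow> 'v \<Rightarrow> 'v"
    and vac om :: 'v
    and bf :: "'v \<Rightarrow> 'v \<Rightarrow> rat"
    and J :: "'v set"
  assumes "is_VOA sc md vac om"
    and "vector_space.dim sc (wtsp sc md om 0) = 1"
    and "is_nondeg_invariant_form sc md om bf"
    and "is_IVOA sc md vac om J"
    and "is_homogeneous sc md om J"
  shows "\<forall>n::nat. \<forall>u\<in>dual_lattice bf J.
           sc (1 / fact n) ((vL md om 1 ^^ n) u) \<in> dual_lattice bf J"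
proof -
  note V = assms(1)[unfolded is_VOA_def]
  interpret vs: vector_space sc using V by (elim conjE) blast
  have linr: "\<And>a n. Vector_Spaces.linear sc sc (md a n)" using V by (elim conjE) blast
  have linl: "\<And>n b. Vector_Spaces.linear sc sc (\<lambda>a. md a n b)" using V by (elim conjE) blast
  have vacm: "\<And>n v. md vac n v = (if n = -1 then v else 0)" using V by (elim conjE) blast
  have cr1: "\<And>a. md a (-1) vac = a" using V by (elim conjE) blast
  have cr2: "\<And>a n. n \<ge> 0 \<Longrightarrow> md a n vac = 0" using V by (elim conjE) blast
  obtain cc :: rat where vir: "\<And>m n v. vL md om m (vL md om n v) - vL md om n (vL md om m v)
        = sc (of_int (m - n)) (vL md om (m + n) v)
          + (if m + n = 0 then sc ((of_int m ^ 3 - of_int m) / 12 * cc) v else 0)"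
    using V by (elim conjE) blast
  have der: "\<And>a n b. md (vL md om (-1) a) n b = sc (- of_int n) (md a (n - 1) b)"
    using V by (elim conjE) fast
  note F = assms(3)[unfolded is_nondeg_invariant_form_def]
  have bl1: "\<And>v. Vector_Spaces.linear sc (*) (\<lambda>u. bf u v)" using F by (elim conjE) blast
  have bl2: "\<And>u. Vector_Spaces.linear sc (*) (bf u)" using F by (elim conjE) blast
  have inv: "\<And>k a n b c. a \<in> wtsp sc md om k \<Longrightarrow>
        bf (md a n b) c
        = sgn_pow k * (\<Sum>j\<in>{0..nat k}.
             (1 / fact j) * bf b (md ((vL md om 1 ^^ j) a) (2 * k - n - int j - 2) c))"
    using F by (elim conjE) blast
  have omw: "om \<in> wtsp sc md om 2" using V by (elim conjE) blast
  note I = assms(4)[unfolded is_IVOA_def is_integral_form_def]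
  have Jcl: "\<And>a b k. a \<in> J \<Longrightarrow> b \<in> J \<Longrightarrow> md a k b \<in> J" using I by (elim conjE exE) blast
  have vJ: "vac \<in> J" using I by (elim conjE exE) blast
  have omv: "om = vL md om (-2) vac" using cr1 by (simp add: vL_def)
  have L1vac: "vL md om 1 vac = 0" by (simp add: vL_def cr2)
  have Lm1vac: "vL md om (-1) vac = 0" by (simp add: vL_def cr2)
  have L1om: "vL md om 1 om = 0"
  proof -
    have "vL md om 1 (vL md om (-2) vac) - vL md om (-2) (vL md om 1 vac)
        = sc (of_int 3) (vL md om (-1) vac)"
      using vir[of 1 "-2" vac] by simp
    moreover have "vL md om (-2) (vL md om 1 vac) = 0"
      using L1vac lin0[OF linr] by (simp add: vL_def)
    ultimately show ?thesis using Lm1vac omv by simp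
  qed
  have pw: "(vL md om 1 ^^ j) om = 0" if "j \<ge> 1" for j
    using that
  proof (induction j)
    case 0 then show ?case by simp
  next
    case (Suc j)
    show ?case
    proof (cases "j = 0")
      case True then show ?thesis using L1om by simp
    next
      case False
      then have "(vL md om 1 ^^ j) om = 0" using Suc by simp
      then show ?thesis using lin0[OF linr] by (simp add: vL_def)
    qed
  qed
  have md0: "\<And>n c. md 0 n c = 0" using lin0[OF linl] by blast
  have adj: "bf (vL md om 1 b) c = bf b (vL md om (-1) c)" for b c
  proof -
    have "bf (md om 2 b) c = sgn_pow 2 * (\<Sum>j\<in>{0..nat 2}.
             (1 / fact j) * bf b (md ((vL md om 1 ^^ j) om) (2 * 2 - 2 - int j - 2) c))"
      using inv[OF omw] .
    also have "{0..nat 2} = {0,1,2::nat}" by auto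
    finally have "bf (md om 2 b) c = bf b (md om 0 c) + bf b (md ((vL md om 1 ^^ 1) om) (-1) c)
       + (1/2) * bf b (md ((vL md om 1 ^^ 2) om) (-2) c)"
      by (simp add: sgn_pow_def numeral_2_eq_2)
    then show ?thesis using pw[of 1] pw[of 2] md0 lin0[OF bl2]
      by (simp add: vL_def)
  qed
  have adjn: "bf ((vL md om 1 ^^ n) b) c = bf b ((vL md om (-1) ^^ n) c)" for n b c
  proof (induction n arbitrary: c)
    case 0 then show ?case by simp
  next
    case (Suc n)
    have "bf ((vL md om 1 ^^ Suc n) b) c = bf ((vL md om 1 ^^ n) b) (vL md om (-1) c)"
      using adj by simp
    also have "\<dots> = bf b ((vL md om (-1) ^^ n) (vL md om (-1) c))" by (rule Suc)
    also have "\<dots> = bf b ((vL md om (-1) ^^ Suc n) c)" by (simp add: funpow_swap1)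
    finally show ?case .
  qed
  have dn: "md ((vL md om (-1) ^^ n) a) (-1) b = sc (fact n) (md a (-1 - int n) b)" for n a b
  proof (induction n arbitrary: a)
    case 0 then show ?case by simp
  next
    case (Suc n)
    have "md ((vL md om (-1) ^^ Suc n) a) (-1) b = md ((vL md om (-1) ^^ n) (vL md om (-1) a)) (-1) b"
      by (simp add: funpow_swap1)
    also have "\<dots> = sc (fact n) (md (vL md om (-1) a) (-1 - int n) b)" by (rule Suc)
    also have "\<dots> = sc (fact n) (sc (- of_int (-1 - int n)) (md a (-1 - int n - 1) b))"
      by (simp add: der)
    also have "\<dots> = sc (fact (Suc n)) (md a (-1 - int (Suc n)) b)"
      by (simp add: algebra_simps)
    finally show ?case .
  qed
  have LJ: "sc (1 / fact n) ((vL md om (-1) ^^ n) v) \<in> J" if "v \<in> J" for n v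
  proof -
    have "(vL md om (-1) ^^ n) v = md ((vL md om (-1) ^^ n) v) (-1) vac" by (simp add: cr1)
    also have "\<dots> = sc (fact n) (md v (-1 - int n) vac)" by (rule dn)
    finally have "sc (1 / fact n) ((vL md om (-1) ^^ n) v) = md v (-1 - int n) vac"
      by simp
    then show ?thesis using Jcl[OF that vJ] by simp
  qed
  show ?thesis
  proof (intro allI ballI)
    fix n :: nat and u assume u: "u \<in> dual_lattice bf J"
    show "sc (1 / fact n) ((vL md om 1 ^^ n) u) \<in> dual_lattice bf J"
      unfolding dual_lattice_def
    proof (intro CollectI ballI)
      fix v assume v: "v \<in> J"
      have "bf (sc (1 / fact n) ((vL md om 1 ^^ n) u)) v = (1 / fact n) * bf u ((vL md om (-1) ^^ n) v)"
        using linsc[OF bl1] adjn by simp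
      also have "\<dots> = bf u (sc (1 / fact n) ((vL md om (-1) ^^ n) v))"
        using linsc[OF bl2] by simp
      finally show "bf (sc (1 / fact n) ((vL md om 1 ^^ n) u)) v \<in> \<int>"
        using u LJ[OF v] unfolding dual_lattice_def by auto
    qed
  qed
qed

end
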